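(* Let $(\lambda_k),(x_k),(y_k)$ be generated by the acceleration framework (context) for a convex differentiable $g$ with minimizer $x^*$, $g^*=g(x^* )$, parameters $\sigma\in(0,1)$, $\delta\ge0$. Then for all $k\ge1$, \[ A_k[g(y_k)-g^*]+\frac12\|x_k-x^*\|^2+\sum_{i\in[k]}\frac{(1-\sigma)A_i}{2\lambda_i}\|y_i-\tilde x_{i-1}\|^2\le\frac12\|x^*\|^2+\delta_k, \] where $\delta_k=\delta\sum_{i\in[k]}a_i\|x_i-x^*\|+\frac{\delta^2}{2(1-\sigma)}\sum_{i\in[k]}a_i^2$.
   Context: Acceleration framework: let $g:\mathbb{R}^d\to\mathbb{R}$ be convex and differentiable, $\sigma\in(0,1)$, $\delta\ge0$, $K\ge1$. Sequences $(\lambda_k)_{k=1}^K\subset(0,\infty)$ and $(x_k)_{k=0}^K,(y_k)_{k=0}^K\subset\mathbb{R}^d$ are generated by the framework if $x_0=y_0=0$, $A_0=0$, and for each $k=0,\dots,K-1$, with $a_{k+1}=\frac12\big[\lambda_{k+1}+\sqrt{\lambda_{k+1}^2+4\lambda_{k+1}A_k}\big]$, $A_{k+1}=A_k+a_{k+1}$, $\tilde x_k=\frac{A_k}{A_{k+1}}y_k+\frac{a_{k+1}}{A_{k+1}}x_k$, one has $\|\lambda_{k+1}\nabla g(y_{k+1})+y_{k+1}-\tilde x_k\|\le\sigma\|y_{k+1}-\tilde x_k\|+\lambda_{k+1}\delta$ and $\|x_{k+1}-(x_k-a_{k+1}\nabla g(y_{k+1}))\|\le a_{k+1}\delta$. (Note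 $\lambda_{k+1}A_{k+1}=a_{k+1}^2$.) *)

theory Defs
  imports "HOL-Analysis.Analysis"
begin

text \<open>Step sizes a_k and accumulated weights A_k determined by the sequence lam
 (lam is indexed from 1; the value lam 0 is irrelevant).\<close>

fun accA :: "(nat \<Rightarrow> real) \<Rightarrow> nat \<Rightarrow> real" where
  "accA lam 0 = 0"
| "accA lam (Suc k) = accA lam k +
     (lam (Suc k) + sqrt ((lam (Suc k))\<^sup>2 + 4 * lam (Suc k) * accA lam k)) / 2"

definition acca :: "(nat \<Rightarrow> real) \<Rightarrow> nat \<Rightarrow> real" where
  "acca lam k = accA lam k - accA lam (k - 1)"

definition xtil :: "(nat \<Rightarrow> real) \<Rightarrow> (nat \<Rightarrow> 'a::real_vector) \<Rightarrow> (nat \<Rightarrow> 'a) \<Rightarrow> nat \<Rightarrow> 'a" where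
  "xtil lam x y k = (accA lam k / accA lam (Suc k)) *\<^sub>R y k
                    + (acca lam (Suc k) / accA lam (Suc k)) *\<^sub>R x k"

text \<open>G is the gradient of g (passed explicitly).\<close>
definition accel_framework ::
  "('a::euclidean_space \<Rightarrow> 'a) \<Rightarrow> real \<Rightarrow> real \<Rightarrow> nat \<Rightarrow> (nat \<Rightarrow> real)
    \<Rightarrow> (nat \<Rightarrow> 'a) \<Rightarrow> (nat \<Rightarrow> 'a) \<Rightarrow> bool" where
  "accel_framework G \<sigma> \<delta> K lam x y \<longleftrightarrow>
     (\<forall>k\<in>{1..K}. lam k > 0) \<and> x 0 = 0 \<and> y 0 = 0 \<and>
     (\<forall>k<K.
        norm (lam (Suc k) *\<^sub>R G (y (Suc k)) + y (Suc k) - xtil lam x y k)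
          \<le> \<sigma> * norm (y (Suc k) - xtil lam x y k) + lam (Suc k) * \<delta>
      \<and> norm (x (Suc k) - (x k - acca lam (Suc k) *\<^sub>R G (y (Suc k))))
          \<le> acca lam (Suc k) * \<delta>)"

end

theory Submission
  imports Defs
begin

lemma grad_ineq:
  fixes g :: "'a::euclidean_space \<Rightarrow> real"
  assumes conv: "convex_on UNIV g" and grad: "\<And>z. GDERIV g z :> G z"
  shows "g w \<ge> g z + inner (G z) (w - z)"
proof -
  define d where "d = w - z"
  define h where "h t = g (z + t *\<^sub>R d)" for t :: real
  have "((\<lambda>t. z + t *\<^sub>R d) has_derivative (\<lambda>t. t *\<^sub>R d)) (at 0)"
    by (auto intro!: derivative_eq_intros)
  moreover have "(g has_derivative (\<lambda>h. inner h (G z))) (at (z + 0 *\<^sub>R d))"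
    using grad[of z] by (simp add: gderiv_def)
  ultimately have "(h has_derivative (\<lambda>t. inner (t *\<^sub>R d) (G z))) (at 0)"
    unfolding h_def by (rule has_derivative_compose)
  hence D: "(h has_field_derivative (inner d (G z))) (at 0)"
    by (simp add: has_field_derivative_def mult.commute[of _ "inner d (G z)"])
  have C: "convex_on UNIV h"
  proof (rule convex_onI)
    fix t x y :: real assume t: "0 < t" "t < 1"
    have "z + ((1 - t) * x + t * y) *\<^sub>R d = (1 - t) *\<^sub>R (z + x *\<^sub>R d) + t *\<^sub>R (z + y *\<^sub>R d)"
      by (simp add: algebra_simps)
    then show "h ((1 - t) *\<^sub>R x + t *\<^sub>R y) \<le> (1 - t) * h x + t * h y"
      unfolding h_def using convex_onD[OF conv, of t "z + x *\<^sub>R d" "z + y *\<^sub>R d"] t by simp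
  qed auto
  have "h 1 - h 0 \<ge> inner d (G z) * (1 - 0)"
    by (rule convex_on_imp_above_tangent[OF C]) (use D in auto)
  thus ?thesis by (simp add: h_def d_def inner_commute)
qed

lemma step_ineq:
  fixes g :: "'a::euclidean_space \<Rightarrow> real" and G :: "'a \<Rightarrow> 'a"
  assumes conv: "convex_on UNIV g" and grad: "\<And>z. GDERIV g z :> G z"
    and sig: "0 < \<sigma>" "\<sigma> < 1" and del: "0 \<le> \<delta>"
    and lp: "0 < l" and Ap: "0 \<le> A" and ap: "0 < a" and A'd: "A' = A + a" and asq: "a\<^sup>2 = l * A'"
    and xt: "A' *\<^sub>R xt = A *\<^sub>R yk + a *\<^sub>R xk"
    and c1: "norm (l *\<^sub>R G yn + yn - xt) \<le> \<sigma> * norm (yn - xt) + l * \<delta>"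
    and c2: "norm (xn - (xk - a *\<^sub>R G yn)) \<le> a * \<delta>"
  shows "A' * (g yn - g xs) + (1/2) * (norm (xn - xs))\<^sup>2 + (1 - \<sigma>) * A' / (2 * l) * (norm (yn - xt))\<^sup>2
     \<le> A * (g yk - g xs) + (1/2) * (norm (xk - xs))\<^sup>2 + \<delta> * (a * norm (xn - xs)) + \<delta>\<^sup>2 / (2 * (1 - \<sigma>)) * a\<^sup>2"
proof -
  define v where "v = G yn"
  define r where "r = yn - xt"
  define p where "p = inner v r"
  define q where "q = inner v (xk - xs)"
  define nv where "nv = (norm v)\<^sup>2"
  define nr where "nr = norm r"
  define N where "N = norm (l *\<^sub>R v + r)"
  define c where "c = A' / (2 * l)"
  have A'p: "A' > 0" using A'd Ap ap by simp
  have cp: "c > 0" using A'p lp by (simp add: c_def)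
  have g1: "g yk \<ge> g yn + inner v (yk - yn)" unfolding v_def by (rule grad_ineq[OF conv grad])
  have g2: "g xs \<ge> g yn + inner v (xs - yn)" unfolding v_def by (rule grad_ineq[OF conv grad])
  have e1: "A' * (g yn - g xs) - A * (g yk - g xs) \<le> A * inner v (yn - yk) + a * inner v (yn - xs)"
  proof -
    have "A * (g yn - g yk) \<le> A * inner v (yn - yk)"
      using mult_left_mono[OF _ Ap, of "g yn - g yk" "inner v (yn - yk)"] g1
      by (simp add: inner_diff_right)
    moreover have "a * (g yn - g xs) \<le> a * inner v (yn - xs)"
      using mult_left_mono[of "g yn - g xs" "inner v (yn - xs)" a] g2 ap
      by (simp add: inner_diff_right)
    ultimately show ?thesis using A'd by (simp add: algebra_simps)
  qed
  have e2: "A * inner v (yn - yk) + a * inner v (yn - xs) = A' * p + a * q"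
  proof -
    have "A' * p = inner v (A' *\<^sub>R yn) - inner v (A' *\<^sub>R xt)"
      by (simp add: p_def r_def inner_diff_right right_diff_distrib)
    also have "\<dots> = inner v (A' *\<^sub>R yn) - A * inner v yk - a * inner v xk"
      using xt by (simp add: inner_add_right)
    finally show ?thesis using A'd
      by (simp add: q_def inner_diff_right algebra_simps)
  qed
  have e3: "(norm (xk - a *\<^sub>R v - xs))\<^sup>2 = (norm (xk - xs))\<^sup>2 - 2 * a * q + a\<^sup>2 * nv"
  proof -
    have "xk - a *\<^sub>R v - xs = (xk - xs) - a *\<^sub>R v" by simp
    then show ?thesis unfolding q_def nv_def power2_norm_eq_inner
      by (simp add: inner_diff_left inner_diff_right inner_commute algebra_simps power2_eq_square)
  qed
  have e4: "(1/2) * (norm (xn - xs))\<^sup>2 \<le> (1/2) * (norm (xk - a *\<^sub>R v - xs))\<^sup>2 + a * \<delta> * norm (xn - xs)"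
  proof -
    define e where "e = xn - (xk - a *\<^sub>R v)"
    define u where "u = xn - xs"
    have ne: "norm e \<le> a * \<delta>" using c2 by (simp add: e_def v_def)
    have "xk - a *\<^sub>R v - xs = u - e" by (simp add: e_def u_def)
    hence h1: "(norm (xk - a *\<^sub>R v - xs))\<^sup>2 = (norm u)\<^sup>2 - 2 * inner u e + (norm e)\<^sup>2"
      by (simp add: power2_norm_eq_inner inner_diff_left inner_diff_right inner_commute)
    have h2: "inner u e \<le> a * \<delta> * norm u"
      using Cauchy_Schwarz_ineq2[of u e] mult_left_mono[OF ne norm_ge_zero[of u]] by (simp add: mult.commute)
    have h3: "0 \<le> (norm e)\<^sup>2" by simp
    from h1 h2 h3 show ?thesis unfolding u_def[symmetric] by linarith
  qed
  have e5: "A' * p + (1/2) * a\<^sup>2 * nv = c * (N\<^sup>2 - nr\<^sup>2)"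
  proof -
    have "N\<^sup>2 = l\<^sup>2 * nv + 2 * l * p + nr\<^sup>2"
      unfolding N_def nv_def p_def nr_def power2_norm_eq_inner
      by (simp add: inner_add_left inner_add_right inner_commute power2_eq_square algebra_simps)
    then have "c * (N\<^sup>2 - nr\<^sup>2) = c * l\<^sup>2 * nv + 2 * c * l * p" by (simp add: algebra_simps)
    also have "c * l\<^sup>2 = (1/2) * a\<^sup>2" using asq lp by (simp add: c_def power2_eq_square field_simps)
    also have "2 * c * l = A'" using lp by (simp add: c_def field_simps)
    finally show ?thesis by simp
  qed
  have e6: "N\<^sup>2 \<le> \<sigma> * nr\<^sup>2 + (l * \<delta>)\<^sup>2 / (1 - \<sigma>)"
  proof -
    have "N \<le> \<sigma> * nr + l * \<delta>" using c1 by (simp add: N_def nr_def v_def r_def algebra_simps)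
    hence "N\<^sup>2 \<le> (\<sigma> * nr + l * \<delta>)\<^sup>2" by (rule power_mono) (simp add: N_def)
    moreover have "(1 - \<sigma>) * (\<sigma> * nr + l * \<delta>)\<^sup>2 \<le> (1 - \<sigma>) * (\<sigma> * nr\<^sup>2) + (l * \<delta>)\<^sup>2"
    proof -
      have "0 \<le> \<sigma> * ((1 - \<sigma>) * nr - l * \<delta>)\<^sup>2" using sig by simp
      thus ?thesis by (simp add: power2_eq_square algebra_simps)
    qed
    hence "(\<sigma> * nr + l * \<delta>)\<^sup>2 \<le> \<sigma> * nr\<^sup>2 + (l * \<delta>)\<^sup>2 / (1 - \<sigma>)"
      using sig by (simp add: field_simps)
    ultimately show ?thesis by linarith
  qed
  have e7: "c * ((l * \<delta>)\<^sup>2 / (1 - \<sigma>)) = \<delta>\<^sup>2 / (2 * (1 - \<sigma>)) * a\<^sup>2"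
    using asq lp sig by (simp add: c_def power2_eq_square field_simps)
  have e8: "(1 - \<sigma>) * A' / (2 * l) * (norm (yn - xt))\<^sup>2 = c * ((1 - \<sigma>) * nr\<^sup>2)"
    by (simp add: c_def nr_def r_def)
  have e9: "c * (N\<^sup>2 - nr\<^sup>2) + c * ((1 - \<sigma>) * nr\<^sup>2) \<le> c * ((l * \<delta>)\<^sup>2 / (1 - \<sigma>))"
  proof -
    have "N\<^sup>2 - nr\<^sup>2 + (1 - \<sigma>) * nr\<^sup>2 \<le> (l * \<delta>)\<^sup>2 / (1 - \<sigma>)" using e6 by (simp add: algebra_simps)
    from mult_left_mono[OF this, of c] cp show ?thesis by (simp add: algebra_simps)
  qed
  have f1: "A' * (g yn - g xs) \<le> A * (g yk - g xs) + (A' * p + a * q)" using e1 e2 by linarith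
  have f2: "(1/2) * (norm (xn - xs))\<^sup>2 \<le> (1/2) * (norm (xk - xs))\<^sup>2 - a * q + (1/2) * a\<^sup>2 * nv + \<delta> * (a * norm (xn - xs))"
    using e3 e4 by (simp add: algebra_simps)
  have f3: "A' * p + (1/2) * a\<^sup>2 * nv + (1 - \<sigma>) * A' / (2 * l) * (norm (yn - xt))\<^sup>2 \<le> \<delta>\<^sup>2 / (2 * (1 - \<sigma>)) * a\<^sup>2"
    using e5 e7 e8 e9 by linarith
  show ?thesis using f1 f2 f3 by linarith
qed

theorem mainTheorem11:
  fixes g :: "'a::euclidean_space \<Rightarrow> real" and G :: "'a \<Rightarrow> 'a"
    and \<sigma> \<delta> :: real and K :: nat and lam :: "nat \<Rightarrow> real"
    and x y :: "nat \<Rightarrow> 'a" and xs :: 'a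
  assumes conv: "convex_on UNIV g"
    and grad: "\<And>z. GDERIV g z :> G z"
    and sigma: "0 < \<sigma>" "\<sigma> < 1"
    and delta: "0 \<le> \<delta>"
    and K: "1 \<le> K"
    and framework: "accel_framework G \<sigma> \<delta> K lam x y"
    and minimizer: "\<And>z. g xs \<le> g z"
    and k: "1 \<le> k" "k \<le> K"
  shows "accA lam k * (g (y k) - g xs) + (1/2) * (norm (x k - xs))\<^sup>2
         + (\<Sum>i\<in>{1..k}. (1 - \<sigma>) * accA lam i / (2 * lam i)
                           * (norm (y i - xtil lam x y (i - 1)))\<^sup>2)
       \<le> (1/2) * (norm xs)\<^sup>2
         + (\<delta> * (\<Sum>i\<in>{1..k}. acca lam i * norm (x i - xs))
            + \<delta>\<^sup>2 / (2 * (1 - \<sigma>)) * (\<Sum>i\<in>{1..k}. (acca lam i)\<^sup>2))"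
proof -
  have lpos: "\<And>j. j < K \<Longrightarrow> lam (Suc j) > 0" using framework by (auto simp: accel_framework_def)
  have Anon: "\<And>j. j \<le> K \<Longrightarrow> 0 \<le> accA lam j"
  proof -
    fix j show "j \<le> K \<Longrightarrow> 0 \<le> accA lam j"
    proof (induction j)
      case 0 then show ?case by simp
    next
      case (Suc j)
      then have "0 \<le> accA lam j" "lam (Suc j) > 0" using lpos by auto
      then show ?case by simp
    qed
  qed
  have x0: "x 0 = 0" using framework by (simp add: accel_framework_def)
  define P where "P k \<longleftrightarrow> accA lam k * (g (y k) - g xs) + (1/2) * (norm (x k - xs))\<^sup>2
         + (\<Sum>i\<in>{1..k}. (1 - \<sigma>) * accA lam i / (2 * lam i)
                           * (norm (y i - xtil lam x y (i - 1)))\<^sup>2)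
       \<le> (1/2) * (norm xs)\<^sup>2
         + (\<delta> * (\<Sum>i\<in>{1..k}. acca lam i * norm (x i - xs))
            + \<delta>\<^sup>2 / (2 * (1 - \<sigma>)) * (\<Sum>i\<in>{1..k}. (acca lam i)\<^sup>2))" for k
  have "k \<le> K \<Longrightarrow> P k" for k
  proof (induction k)
    case 0 then show ?case by (simp add: P_def x0)
  next
    case (Suc j)
    then have jK: "j < K" and IH: "P j" by auto
    define l where "l = lam (Suc j)"
    define A where "A = accA lam j"
    define a where "a = acca lam (Suc j)"
    define A' where "A' = accA lam (Suc j)"
    define s where "s = sqrt (l\<^sup>2 + 4 * l * A)"
    have lp: "0 < l" using lpos[OF jK] by (simp add: l_def)
    have Ap: "0 \<le> A" using Anon jK by (simp add: A_def)
    have arg: "0 \<le> l\<^sup>2 + 4 * l * A" using lp Ap by (intro add_nonneg_nonneg) auto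
    have s2: "s\<^sup>2 = l\<^sup>2 + 4 * l * A" unfolding s_def using arg by (rule real_sqrt_pow2)
    have s0: "0 \<le> s" unfolding s_def using arg by (rule real_sqrt_ge_zero)
    have ad: "a = (l + s) / 2" by (simp add: a_def acca_def l_def s_def A_def)
    have ap: "0 < a" using ad lp s0 by simp
    have A'd: "A' = A + a" by (simp add: a_def acca_def A'_def A_def)
    have asq: "a\<^sup>2 = l * A'" using s2 unfolding A'd ad by (simp add: power2_eq_square algebra_simps)
    have A'p: "0 < A'" using A'd Ap ap by simp
    have xt: "A' *\<^sub>R xtil lam x y j = A *\<^sub>R y j + a *\<^sub>R x j"
      using A'p by (simp add: xtil_def A_def a_def A'_def scaleR_add_right)
    have c12: "norm (l *\<^sub>R G (y (Suc j)) + y (Suc j) - xtil lam x y j)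
          \<le> \<sigma> * norm (y (Suc j) - xtil lam x y j) + l * \<delta>"
      "norm (x (Suc j) - (x j - a *\<^sub>R G (y (Suc j)))) \<le> a * \<delta>"
      using framework jK by (auto simp: accel_framework_def l_def a_def)
    note st = step_ineq[OF conv grad sigma delta lp Ap ap A'd asq xt c12, of xs]
    have S1: "(\<Sum>i\<in>{1..Suc j}. (1 - \<sigma>) * accA lam i / (2 * lam i) * (norm (y i - xtil lam x y (i - 1)))\<^sup>2)
      = (\<Sum>i\<in>{1..j}. (1 - \<sigma>) * accA lam i / (2 * lam i) * (norm (y i - xtil lam x y (i - 1)))\<^sup>2)
        + (1 - \<sigma>) * A' / (2 * l) * (norm (y (Suc j) - xtil lam x y j))\<^sup>2"
      by (simp add: A'_def l_def)
    have S2: "\<delta> * (\<Sum>i\<in>{1..Suc j}. acca lam i * norm (x i - xs))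
      = \<delta> * (\<Sum>i\<in>{1..j}. acca lam i * norm (x i - xs)) + \<delta> * (a * norm (x (Suc j) - xs))"
      by (simp add: a_def distrib_left)
    have S3: "\<delta>\<^sup>2 / (2 * (1 - \<sigma>)) * (\<Sum>i\<in>{1..Suc j}. (acca lam i)\<^sup>2)
      = \<delta>\<^sup>2 / (2 * (1 - \<sigma>)) * (\<Sum>i\<in>{1..j}. (acca lam i)\<^sup>2) + \<delta>\<^sup>2 / (2 * (1 - \<sigma>)) * a\<^sup>2"
      by (simp add: a_def distrib_left)
    have IH': "A * (g (y j) - g xs) + (1/2) * (norm (x j - xs))\<^sup>2
         + (\<Sum>i\<in>{1..j}. (1 - \<sigma>) * accA lam i / (2 * lam i)
                           * (norm (y i - xtil lam x y (i - 1)))\<^sup>2)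
       \<le> (1/2) * (norm xs)\<^sup>2
         + (\<delta> * (\<Sum>i\<in>{1..j}. acca lam i * norm (x i - xs))
            + \<delta>\<^sup>2 / (2 * (1 - \<sigma>)) * (\<Sum>i\<in>{1..j}. (acca lam i)\<^sup>2))"
      using IH by (simp add: P_def A_def)
    have "A' * (g (y (Suc j)) - g xs) + (1/2) * (norm (x (Suc j) - xs))\<^sup>2
         + (\<Sum>i\<in>{1..Suc j}. (1 - \<sigma>) * accA lam i / (2 * lam i)
                           * (norm (y i - xtil lam x y (i - 1)))\<^sup>2)
       \<le> (1/2) * (norm xs)\<^sup>2
         + (\<delta> * (\<Sum>i\<in>{1..Suc j}. acca lam i * norm (x i - xs))
            + \<delta>\<^sup>2 / (2 * (1 - \<sigma>)) * (\<Sum>i\<in>{1..Suc j}. (acca lam i)\<^sup>2))"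
      unfolding S1 S2 S3 using IH' st by linarith
    then show ?case by (simp add: P_def A'_def)
  qed
  then show ?thesis using k by (simp add: P_def)
qed

end
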